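(* Let $G$ be a large scale group, let $K$ be a symmetric bounded subset of $G$ containing $1_G$, and let $B$ be a bounded subset of $G$ such that $G\setminus B$ has exactly two $K$-components $L$ and $R$, both unbounded, and $G$ acts trivially on $L$ and on $R$. Suppose one of the following holds: (1) $B$ is $K$-connected; (2) $B\subseteq h\cdot K^n$ for some $h\in G$ and $n\ge1$. Then $G$ has a cyclic subgroup of bounded index.
   Context: A bornology on a set is a cover closed under subsets and finite unions. A large scale group is a group $G$ with a bornology $\mathcal B$ closed under inverses and products; its uniformly bounded covers are the covers refining $\{gB\}_{g\in G}$ for some $B\in\mathcal B$; bounded sets are members of $\mathcal B$. $K^n$ denotes the $n$-fold product set $K\cdots K$. For a symmetric $K\subseteq G$ ($K^{-1}=K$), a $K$-chain is a finite sequence $g_1,\dots,g_k$ in $G$ with $g_i^{-1}g_{i+1}\in K$ for all $i<k$; a set $C$ is $K$-connected if any two of its elements are joined by a $K$-chain in $C$; the $K$-components of $A\subseteq G$ are the equivalence classes of $A$ under the relation "joined by a $K$-chain lying in $A$". $G$ acts trivially on $A\subseteq G$ if the symmetric difference $A\,\Delta\,(g\cdot A)$ is bounded for each $g\in G$. A subgroup $H$ is of bounded index if $B'\cdot H=G$ for some bounded $B'$. *)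

theory Defs
  imports "HOL-Algebra.Coset"
begin

definition bornology :: "'a set \<Rightarrow> 'a set set \<Rightarrow> bool" where
  "bornology X \<B> \<longleftrightarrow>
     (\<forall>B\<in>\<B>. B \<subseteq> X) \<and> (\<forall>x\<in>X. \<exists>B\<in>\<B>. x \<in> B) \<and>
     (\<forall>B\<in>\<B>. \<forall>C. C \<subseteq> B \<longrightarrow> C \<in> \<B>) \<and>
     (\<forall>B\<in>\<B>. \<forall>C\<in>\<B>. B \<union> C \<in> \<B>)"

definition large_scale_group :: "('a, 'b) monoid_scheme \<Rightarrow> 'a set set \<Rightarrow> bool" where
  "large_scale_group G \<B> \<longleftrightarrow> group G \<and> bornology (carrier G) \<B> \<and>
     (\<forall>B\<in>\<B>. (\<lambda>x. inv\<^bsub>G\<^esub> x) ` B \<in> \<B>) \<and>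
     (\<forall>B\<in>\<B>. \<forall>C\<in>\<B>. B <#>\<^bsub>G\<^esub> C \<in> \<B>)"

fun set_pow :: "('a, 'b) monoid_scheme \<Rightarrow> 'a set \<Rightarrow> nat \<Rightarrow> 'a set" where
  "set_pow G K 0 = {\<one>\<^bsub>G\<^esub>}"
| "set_pow G K (Suc 0) = K"
| "set_pow G K (Suc (Suc n)) = set_pow G K (Suc n) <#>\<^bsub>G\<^esub> K"

definition K_chain :: "('a, 'b) monoid_scheme \<Rightarrow> 'a set \<Rightarrow> 'a list \<Rightarrow> bool" where
  "K_chain G K xs \<longleftrightarrow> xs \<noteq> [] \<and> set xs \<subseteq> carrier G \<and>
     (\<forall>i. Suc i < length xs \<longrightarrow> inv\<^bsub>G\<^esub> (xs ! i) \<otimes>\<^bsub>G\<^esub> (xs ! Suc i) \<in> K)"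

definition K_joined_in :: "('a, 'b) monoid_scheme \<Rightarrow> 'a set \<Rightarrow> 'a set \<Rightarrow> 'a \<Rightarrow> 'a \<Rightarrow> bool" where
  "K_joined_in G K A x y \<longleftrightarrow>
     (\<exists>xs. K_chain G K xs \<and> set xs \<subseteq> A \<and> hd xs = x \<and> last xs = y)"

definition K_connected :: "('a, 'b) monoid_scheme \<Rightarrow> 'a set \<Rightarrow> 'a set \<Rightarrow> bool" where
  "K_connected G K C \<longleftrightarrow> (\<forall>x\<in>C. \<forall>y\<in>C. K_joined_in G K C x y)"

definition K_components :: "('a, 'b) monoid_scheme \<Rightarrow> 'a set \<Rightarrow> 'a set \<Rightarrow> 'a set set" where
  "K_components G K A = {{y \<in> A. K_joined_in G K A x y} | x. x \<in> A}"

definition acts_trivially :: "('a, 'b) monoid_scheme \<Rightarrow> 'a set set \<Rightarrow> 'a set \<Rightarrow> bool" where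
  "acts_trivially G \<B> A \<longleftrightarrow>
     (\<forall>g\<in>carrier G. (A - (g <#\<^bsub>G\<^esub> A)) \<union> ((g <#\<^bsub>G\<^esub> A) - A) \<in> \<B>)"

definition bounded_index :: "('a, 'b) monoid_scheme \<Rightarrow> 'a set set \<Rightarrow> 'a set \<Rightarrow> bool" where
  "bounded_index G \<B> H \<longleftrightarrow> (\<exists>B'\<in>\<B>. B' <#>\<^bsub>G\<^esub> H = carrier G)"

end

theory Submission imports Defs "HOL-Algebra.Elementary_Groups"
begin

definition stp :: "('a, 'b) monoid_scheme \<Rightarrow> 'a set \<Rightarrow> 'a set \<Rightarrow> 'a \<Rightarrow> 'a \<Rightarrow> bool" where
  "stp G K A x y \<longleftrightarrow> x \<in> A \<and> y \<in> A \<and> inv\<^bsub>G\<^esub> x \<otimes>\<^bsub>G\<^esub> y \<in> K"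

lemma K_chain_single: "K_chain G K [x] \<longleftrightarrow> x \<in> carrier G"
  by (simp add: K_chain_def)

lemma K_chain_cons2: "K_chain G K (x # y # ys) \<longleftrightarrow>
   x \<in> carrier G \<and> inv\<^bsub>G\<^esub> x \<otimes>\<^bsub>G\<^esub> y \<in> K \<and> K_chain G K (y # ys)"
proof -
  have "(\<forall>i. Suc i < length (x # y # ys) \<longrightarrow> inv\<^bsub>G\<^esub> ((x # y # ys) ! i) \<otimes>\<^bsub>G\<^esub> ((x # y # ys) ! Suc i) \<in> K)
    \<longleftrightarrow> inv\<^bsub>G\<^esub> x \<otimes>\<^bsub>G\<^esub> y \<in> K \<and> (\<forall>i. Suc i < length (y # ys) \<longrightarrow> inv\<^bsub>G\<^esub> ((y # ys) ! i) \<otimes>\<^bsub>G\<^esub> ((y # ys) ! Suc i) \<in> K)"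
    (is "?A \<longleftrightarrow> ?B")
  proof
    assume ?A
    show ?B
    proof
      show "inv\<^bsub>G\<^esub> x \<otimes>\<^bsub>G\<^esub> y \<in> K" using \<open>?A\<close>[rule_format, of 0] by simp
      show "\<forall>i. Suc i < length (y # ys) \<longrightarrow> inv\<^bsub>G\<^esub> ((y # ys) ! i) \<otimes>\<^bsub>G\<^esub> ((y # ys) ! Suc i) \<in> K"
        using \<open>?A\<close> by (metis (no_types, lifting) Suc_less_eq length_Cons nth_Cons_Suc)
    qed
  next
    assume ?B
    show ?A
    proof (intro allI impI)
      fix i assume "Suc i < length (x # y # ys)"
      then show "inv\<^bsub>G\<^esub> ((x # y # ys) ! i) \<otimes>\<^bsub>G\<^esub> ((x # y # ys) ! Suc i) \<in> K"
        using \<open>?B\<close> by (cases i) auto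
    qed
  qed
  then show ?thesis unfolding K_chain_def by auto
qed

lemma joined_imp: 
  assumes "K_joined_in G K A x y" shows "x \<in> A \<and> (stp G K A)\<^sup>*\<^sup>* x y"
proof -
  obtain xs where xs: "K_chain G K xs" "set xs \<subseteq> A" "hd xs = x" "last xs = y"
    using assms unfolding K_joined_in_def by blast
  have "\<And>x. K_chain G K xs \<Longrightarrow> set xs \<subseteq> A \<Longrightarrow> hd xs = x \<Longrightarrow> x \<in> A \<and> (stp G K A)\<^sup>*\<^sup>* x (last xs)"
  proof (induction xs)
    case Nil then show ?case by (simp add: K_chain_def)
  next
    case (Cons a xs)
    show ?case
    proof (cases xs)
      case Nil then show ?thesis using Cons.prems by auto
    next
      case (Cons b ys)
      have "K_chain G K xs" "inv\<^bsub>G\<^esub> a \<otimes>\<^bsub>G\<^esub> b \<in> K" using Cons.prems(1) K_chain_cons2 Cons by metis+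
      then have "(stp G K A)\<^sup>*\<^sup>* b (last xs)" using Cons.IH[of b] Cons.prems Cons by auto
      moreover have "stp G K A a b" using Cons.prems \<open>inv\<^bsub>G\<^esub> a \<otimes>\<^bsub>G\<^esub> b \<in> K\<close> Cons by (auto simp: stp_def)
      ultimately show ?thesis using Cons.prems Cons
        by (metis converse_rtranclp_into_rtranclp last_ConsR list.discI list.sel(1) list.set_intros(1) subsetD)
    qed
  qed
  then show ?thesis using xs by blast
qed

lemma imp_joined:
  assumes "(stp G K A)\<^sup>*\<^sup>* x y" "x \<in> A" "A \<subseteq> carrier G" shows "K_joined_in G K A x y"
  using assms
proof (induction rule: converse_rtranclp_induct)
  case base
  then show ?case unfolding K_joined_in_def by (intro exI[of _ "[y]"]) (auto simp: K_chain_single)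
next
  case (step x z)
  have "z \<in> A" using step(1) by (simp add: stp_def)
  then obtain xs where xs: "K_chain G K xs" "set xs \<subseteq> A" "hd xs = z" "last xs = y"
    using step unfolding K_joined_in_def by blast
  then obtain ys where ys: "xs = z # ys" by (cases xs) (auto simp: K_chain_def)
  have "K_chain G K (x # xs)" using xs ys step K_chain_cons2[of G K x z ys] by (auto simp: stp_def)
  then show ?case unfolding K_joined_in_def using xs ys step
    by (intro exI[of _ "x # xs"]) auto
qed

lemma joined_iff: "A \<subseteq> carrier G \<Longrightarrow> K_joined_in G K A x y \<longleftrightarrow> x \<in> A \<and> (stp G K A)\<^sup>*\<^sup>* x y"
  using joined_imp imp_joined by metis

lemma int_crossing: "\<not> P (m0::int) \<Longrightarrow> P (m0 + int j) \<Longrightarrow> \<exists>m. \<not> P (-1 + m) \<and> P m"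
proof (induction j)
  case 0 then show ?case by simp
next
  case (Suc j)
  show ?case
  proof (cases "P (m0 + int j)")
    case True then show ?thesis using Suc by blast
  next
    case False
    then show ?thesis using Suc.prems by (intro exI[of _ "m0 + int (Suc j)"]) auto
  qed
qed

lemma rt_in: "(stp G K A)\<^sup>*\<^sup>* x y \<Longrightarrow> x \<in> A \<Longrightarrow> y \<in> A"
  by (induction rule: rtranclp_induct) (auto simp: stp_def)

context group
begin

lemma stp_sym:
  assumes "\<forall>k\<in>K. inv k \<in> K" "A \<subseteq> carrier G" "stp G K A x y" shows "stp G K A y x"
proof -
  have xy: "x \<in> carrier G" "y \<in> carrier G" using assms by (auto simp: stp_def)
  have "inv (inv x \<otimes> y) = inv y \<otimes> x" using xy by (simp add: inv_mult_group)
  then show ?thesis using assms(1,3) xy unfolding stp_def by metis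
qed

lemma rt_sym:
  assumes "\<forall>k\<in>K. inv k \<in> K" "A \<subseteq> carrier G" "(stp G K A)\<^sup>*\<^sup>* x y" shows "(stp G K A)\<^sup>*\<^sup>* y x"
proof -
  have "symp (stp G K A)" using stp_sym[OF assms(1,2)] by (auto intro: sympI)
  then show ?thesis using assms(3) symp_rtranclp by (metis sympD)
qed

lemma stp_map:
  assumes "g \<in> carrier G" "A \<subseteq> carrier G" "\<And>a. a \<in> A \<Longrightarrow> g \<otimes> a \<in> A'" "stp G K A x y"
  shows "stp G K A' (g \<otimes> x) (g \<otimes> y)"
proof -
  have xy: "x \<in> carrier G" "y \<in> carrier G" "x \<in> A" "y \<in> A" using assms by (auto simp: stp_def)
  have "inv (g \<otimes> x) \<otimes> (g \<otimes> y) = inv x \<otimes> y"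
    using xy assms(1) by (simp add: inv_mult_group m_assoc[symmetric]) (simp add: m_assoc)
  then show ?thesis using assms xy by (auto simp: stp_def)
qed

lemma rt_map:
  assumes "g \<in> carrier G" "A \<subseteq> carrier G" "\<And>a. a \<in> A \<Longrightarrow> g \<otimes> a \<in> A'" "(stp G K A)\<^sup>*\<^sup>* x y"
  shows "(stp G K A')\<^sup>*\<^sup>* (g \<otimes> x) (g \<otimes> y)"
  using assms(4)
proof (induction rule: rtranclp_induct)
  case base then show ?case by simp
next
  case (step y z)
  then show ?case using stp_map[OF assms(1,2,3) step(2)] by (meson rtranclp.rtrancl_into_rtrancl)
qed

lemma rt_mono:
  assumes "A \<subseteq> A'" "A' \<subseteq> carrier G" "(stp G K A)\<^sup>*\<^sup>* x y"
  shows "(stp G K A')\<^sup>*\<^sup>* x y"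
  using assms(3)
proof (induction rule: rtranclp_induct)
  case (step y z)
  then have "stp G K A' y z" using assms(1) by (auto simp: stp_def)
  then show ?case using step by (meson rtranclp.rtrancl_into_rtrancl)
qed simp


lemma sp_Suc2: "set_pow G K (Suc (Suc n)) = set_pow G K (Suc n) <#> K" by simp

lemma sp_car: "K \<subseteq> carrier G \<Longrightarrow> set_pow G K n \<subseteq> carrier G"
proof (induction n)
  case (Suc n) then show ?case by (cases n) (auto simp: set_mult_closed)
qed simp

lemma sp_sub: "K \<subseteq> carrier G \<Longrightarrow> \<one> \<in> K \<Longrightarrow> set_pow G K (Suc n) \<subseteq> set_pow G K (Suc (Suc n))"
proof
  fix x assume "K \<subseteq> carrier G" "\<one> \<in> K" "x \<in> set_pow G K (Suc n)"
  moreover have "x = x \<otimes> \<one>" using sp_car[of K "Suc n"] calculation by auto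
  ultimately show "x \<in> set_pow G K (Suc (Suc n))" unfolding sp_Suc2 set_mult_def by blast
qed

lemma sp_one: "K \<subseteq> carrier G \<Longrightarrow> \<one> \<in> K \<Longrightarrow> \<one> \<in> set_pow G K n"
proof (induction n)
  case (Suc n) then show ?case using sp_sub[of K] by (cases n) auto
qed simp

lemma sp_con: assumes "K \<subseteq> carrier G" "\<one> \<in> K"
  shows "\<forall>x\<in>set_pow G K (Suc n). (stp G K (set_pow G K (Suc n)))\<^sup>*\<^sup>* \<one> x"
proof (induction n)
  case 0
  have "stp G K K \<one> x" if "x \<in> K" for x using that assms by (auto simp: stp_def)
  then show ?case by auto
next
  case (Suc n)
  show ?case
  proof
    fix x assume "x \<in> set_pow G K (Suc (Suc n))"
    then obtain y k where yk: "y \<in> set_pow G K (Suc n)" "k \<in> K" "x = y \<otimes> k"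
      unfolding sp_Suc2 set_mult_def by blast
    have yc: "y \<in> carrier G" "k \<in> carrier G" using yk sp_car[OF assms(1)] assms by auto
    have "(stp G K (set_pow G K (Suc (Suc n))))\<^sup>*\<^sup>* \<one> y"
      using rt_mono[OF sp_sub[OF assms] sp_car[OF assms(1)]] Suc yk by blast
    moreover have "stp G K (set_pow G K (Suc (Suc n))) y x"
      using yk yc sp_sub[OF assms] \<open>x \<in> _\<close> by (auto simp: stp_def m_assoc[symmetric])
    ultimately show "(stp G K (set_pow G K (Suc (Suc n))))\<^sup>*\<^sup>* \<one> x"
      by (meson rtranclp.rtrancl_into_rtrancl)
  qed
qed

lemma sp_bdd: "K \<in> \<B> \<Longrightarrow> (\<forall>B\<in>\<B>. \<forall>C\<in>\<B>. B <#> C \<in> \<B>) \<Longrightarrow> {\<one>} \<in> \<B> \<Longrightarrow> set_pow G K n \<in> \<B>"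
proof (induction n)
  case (Suc n) then show ?case by (cases n) auto
qed simp

lemma eventually_in:
  assumes "f \<in> carrier G" "P \<subseteq> carrier G"
    "\<And>x w. x \<in> P \<Longrightarrow> stp G K (carrier G) x w \<Longrightarrow> w \<in> P \<union> B"
    "\<And>n b. n \<ge> 1 \<Longrightarrow> b \<in> B \<Longrightarrow> f [^] (n::nat) \<otimes> b \<in> P"
    "(stp G K (carrier G))\<^sup>*\<^sup>* b0 y" "b0 \<in> B" "B \<subseteq> carrier G"
  shows "\<exists>N. \<forall>n\<ge>N. f [^] (n::nat) \<otimes> y \<in> P"
  using assms(5)
proof (induction rule: rtranclp_induct)
  case base
  then show ?case using assms(4,6) by (intro exI[of _ 1]) auto
next
  case (step y w)
  obtain N where N: "\<forall>n\<ge>N. f [^] (n::nat) \<otimes> y \<in> P" using step by blast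
  have wc: "w \<in> carrier G" "y \<in> carrier G" using step(2) by (auto simp: stp_def)
  show ?case
  proof (cases "\<exists>m\<ge>N. f [^] (m::nat) \<otimes> w \<in> B")
    case True
    then obtain m where m: "m \<ge> N" "f [^] (m::nat) \<otimes> w \<in> B" by blast
    have "f [^] n \<otimes> w \<in> P" if "n \<ge> Suc m" for n
    proof -
      have "f [^] n = f [^] (n - m) \<otimes> f [^] m" using that assms(1) nat_pow_mult[of f "n-m" m] by simp
      then have "f [^] n \<otimes> w = f [^] (n - m) \<otimes> (f [^] m \<otimes> w)" using wc assms(1) by (simp add: m_assoc)
      then show ?thesis using assms(4)[of "n - m" "f [^] m \<otimes> w"] m that by simp
    qed
    then show ?thesis by blast
  next
    case False
    have "f [^] n \<otimes> w \<in> P" if "n \<ge> N" for n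
    proof -
      have "stp G K (carrier G) (f [^] n \<otimes> y) (f [^] n \<otimes> w)"
        using stp_map[OF _ _ _ step(2), of "f [^] n" "carrier G"] assms(1) by auto
      then show ?thesis using assms(3)[of "f [^] n \<otimes> y"] N False that by auto
    qed
    then show ?thesis by blast
  qed
qed


lemma main:
  assumes bor: "bornology (carrier G) \<B>" and invc: "\<forall>B\<in>\<B>. (\<lambda>x. inv x) ` B \<in> \<B>"
    and mulc: "\<forall>B\<in>\<B>. \<forall>C\<in>\<B>. B <#> C \<in> \<B>"
    and Kc: "K \<subseteq> carrier G" and Ki: "(\<lambda>x. inv x) ` K = K" and KB: "K \<in> \<B>" and K1: "\<one> \<in> K"
    and BB: "B \<in> \<B>"
    and comps: "K_components G K (carrier G - B) = {L, R}" and LR: "L \<noteq> R"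
    and Lu: "L \<notin> \<B>" and Ru: "R \<notin> \<B>"
    and Lt: "acts_trivially G \<B> L" and Rt: "acts_trivially G \<B> R"
    and cases: "K_connected G K B \<or> (\<exists>h\<in>carrier G. \<exists>n\<ge>1. B \<subseteq> h <# set_pow G K n)"
  shows "\<exists>g\<in>carrier G. subgroup {g [^] (k::int) | k. True} G \<and>
           bounded_index G \<B> {g [^] (k::int) | k. True}"
proof -
  have bor1: "\<forall>B\<in>\<B>. B \<subseteq> carrier G" and bor2: "\<forall>x\<in>carrier G. \<exists>B\<in>\<B>. x \<in> B"
    and bor3: "\<forall>B\<in>\<B>. \<forall>C. C \<subseteq> B \<longrightarrow> C \<in> \<B>" and bor4: "\<forall>B\<in>\<B>. \<forall>C\<in>\<B>. B \<union> C \<in> \<B>"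
    using bor unfolding bornology_def by blast+
  have bsub: "Y \<in> \<B>" if "X \<in> \<B>" "Y \<subseteq> X" for X Y using bor3 that by blast
  have bun: "X \<union> Y \<in> \<B>" if "X \<in> \<B>" "Y \<in> \<B>" for X Y using bor4 that by blast
  have bcar: "X \<subseteq> carrier G" if "X \<in> \<B>" for X using bor1 that by blast
  have bsing: "{x} \<in> \<B>" if xc: "x \<in> carrier G" for x
  proof -
    obtain X where "X \<in> \<B>" "x \<in> X" using bor2 xc by blast
    then show ?thesis using bsub[of X "{x}"] by blast
  qed
  have bempty: "{} \<in> \<B>" using bsub[OF bsing[OF one_closed], of "{}"] by blast
  have blc: "g <# X \<in> \<B>" if "g \<in> carrier G" "X \<in> \<B>" for g X
    using mulc bsing that by (simp add: l_coset_eq_set_mult)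
  have brc: "X #> g \<in> \<B>" if "g \<in> carrier G" "X \<in> \<B>" for g X
    using mulc bsing that by (simp add: r_coset_eq_set_mult)
  have Kinv: "\<forall>k\<in>K. inv k \<in> K" using Ki by blast
  have Bc: "B \<subseteq> carrier G" using bcar BB .
  define S where "S = carrier G - B"
  have Sc: "S \<subseteq> carrier G" unfolding S_def by blast
  define Rs where "Rs = (stp G K S)\<^sup>*\<^sup>*"
  define Rg where "Rg = (stp G K (carrier G))\<^sup>*\<^sup>*"
  have Rs_sym: "Rs y x" if "Rs x y" for x y using rt_sym[OF Kinv Sc] that Rs_def by blast
  have Rg_sym: "Rg y x" if "Rg x y" for x y using rt_sym[OF Kinv] that Rg_def by blast
  have comp_char: "\<exists>x\<in>S. Q = {y. Rs x y}" if "Q \<in> {L, R}" for Q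
  proof -
    have "Q \<in> K_components G K S" using that comps S_def by simp
    then obtain x where x: "x \<in> S" "Q = {y \<in> S. K_joined_in G K S x y}"
      unfolding K_components_def by blast
    have "K_joined_in G K S x y \<longleftrightarrow> Rs x y" for y using joined_iff[OF Sc] x(1) Rs_def by blast
    moreover have "Rs x y \<Longrightarrow> y \<in> S" for y using rt_in x(1) Rs_def by metis
    ultimately have "Q = {y. Rs x y}" using x(2) by blast
    then show ?thesis using x by blast
  qed
  have comp_in: "{z. Rs y z} \<in> {L, R}" if yS: "y \<in> S" for y
  proof -
    have c: "{z \<in> S. K_joined_in G K S y z} \<in> K_components G K S"
      using yS unfolding K_components_def by blast
    have e1: "K_joined_in G K S y z \<longleftrightarrow> Rs y z" for z using joined_iff[OF Sc] yS Rs_def by blast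
    have e2: "Rs y z \<Longrightarrow> z \<in> S" for z using rt_in yS Rs_def by metis
    have "{z \<in> S. K_joined_in G K S y z} = {z. Rs y z}" using e1 e2 by blast
    then show ?thesis using c comps S_def by simp
  qed
  have PS: "P \<subseteq> S" if PP: "P \<in> {L, R}" for P
  proof -
    obtain x where "x \<in> S" "P = {y. Rs x y}" using comp_char[OF PP] by blast
    then show ?thesis using rt_in Rs_def by fastforce
  qed
  have Pcl: "v \<in> P" if "P \<in> {L, R}" "u \<in> P" "Rs u v" for P u v
    using comp_char[OF that(1)] that by (auto dest: rtranclp_trans simp: Rs_def)
  have Pcon: "Rs u v" if "P \<in> {L, R}" "u \<in> P" "v \<in> P" for P u v
    using comp_char[OF that(1)] that Rs_sym by (auto dest: rtranclp_trans simp: Rs_def)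
  have LRd: "L \<inter> R = {}"
  proof (rule ccontr)
    assume "L \<inter> R \<noteq> {}"
    then obtain z where z: "z \<in> L" "z \<in> R" by blast
    have "v \<in> L \<longleftrightarrow> v \<in> R" for v using Pcl[of L z v] Pcl[of R z v] Pcon[of L v z] Pcon[of R v z] Pcon[of L z v] Pcon[of R z v] z Rs_sym by blast
    then have "L = R" by blast
    then show False using LR by simp
  qed
  have LRS: "L \<union> R = S"
  proof
    show "L \<union> R \<subseteq> S" using PS by blast
    show "S \<subseteq> L \<union> R"
    proof
      fix y assume "y \<in> S"
      then have "{z. Rs y z} \<in> {L, R}" "y \<in> {z. Rs y z}" using comp_in by (auto simp: Rs_def)
      then show "y \<in> L \<union> R" by blast
    qed
  qed
  have Lne: "L \<noteq> {}" using Lu bempty by auto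
  have Rne: "R \<noteq> {}" using Ru bempty by auto
  have Pstep: "w \<in> P \<union> B" if "P \<in> {L, R}" "u \<in> P" "stp G K (carrier G) u w" for P u w
  proof (cases "w \<in> B")
    case False
    then have "stp G K S u w" using that PS unfolding stp_def S_def by blast
    then have "Rs u w" unfolding Rs_def by blast
    then show ?thesis using Pcl that by blast
  qed simp
  have Pbdd: "P \<in> \<B>" if "P \<in> {L,R}" "g \<in> carrier G" "P \<subseteq> P - (g <# P)" for P g
  proof -
    have "acts_trivially G \<B> P" using that Lt Rt by blast
    then have "(P - (g <# P)) \<union> ((g <# P) - P) \<in> \<B>" using that unfolding acts_trivially_def by blast
    then show ?thesis using that bsub by blast
  qed
  have reach: "\<exists>b\<in>B. Rg b y" if yc: "y \<in> carrier G" for y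
  proof (rule ccontr)
    assume nr: "\<not> (\<exists>b\<in>B. Rg b y)"
    define M where "M = {z. Rg y z}"
    have MB: "z \<notin> B" if "z \<in> M" for z using that nr Rg_sym M_def by blast
    have MRs: "Rs y z" if "Rg y z" for z
      using that unfolding Rg_def
    proof (induction rule: rtranclp_induct)
      case base then show ?case by (simp add: Rs_def)
    next
      case (step z w)
      have "z \<in> M" "w \<in> M" using step(1,2) unfolding M_def Rg_def
        by (auto intro: rtranclp.rtrancl_into_rtrancl)
      then have "stp G K S z w" using step(2) MB unfolding stp_def S_def by blast
      then show ?case using step(3) by (auto simp: Rs_def intro: rtranclp.rtrancl_into_rtrancl)
    qed
    have yS: "y \<in> S" using yc MB[of y] M_def S_def by (auto simp: Rg_def)
    then obtain P where P: "P \<in> {L, R}" "y \<in> P" using LRS by blast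
    have MP: "M = P"
    proof
      show "M \<subseteq> P"
      proof
        fix z assume "z \<in> M"
        then have "Rs y z" using MRs M_def by blast
        then show "z \<in> P" using Pcl[OF P] by blast
      qed
      show "P \<subseteq> M"
      proof
        fix p assume "p \<in> P"
        then have "Rs y p" using Pcon[OF P] by blast
        then have "Rg y p" unfolding Rs_def Rg_def using rt_mono[OF Sc order_refl] by blast
        then show "p \<in> M" using M_def by blast
      qed
    qed
    have "\<exists>x\<in>carrier G. x \<notin> P"
    proof (cases "P = L")
      case True
      obtain x where "x \<in> R" using Rne by blast
      then show ?thesis using True LRd PS[of R] Sc by blast
    next
      case False
      then have "P = R" using P by blast
      obtain x where "x \<in> L" using Lne by blast
      then show ?thesis using \<open>P = R\<close> LRd PS[of L] Sc by blast
    qed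
    then obtain x where x: "x \<in> carrier G" "x \<notin> P" by blast
    define g where "g = x \<otimes> inv y"
    have gc: "g \<in> carrier G" using x yc g_def by simp
    have gy: "g \<otimes> y = x" using x yc g_def by (simp add: m_assoc)
    have gp: "g \<otimes> p \<notin> P" if p: "p \<in> P" for p
      proof
        assume "g \<otimes> p \<in> P"
        then have "Rg y (g \<otimes> p)" using MP M_def by blast
        moreover have "Rg y p" using MP M_def p by blast
        then have "Rg (g \<otimes> y) (g \<otimes> p)" using rt_map[of g "carrier G" "carrier G" K y p] gc unfolding Rg_def by simp
        then have "Rg x (g \<otimes> p)" using gy by simp
        ultimately have "Rg y x" using Rg_sym by (auto simp: Rg_def dest: rtranclp_trans)
        then show False using MP M_def x by blast
      qed
    have "P \<subseteq> P - (g <# P)" using gp unfolding l_coset_def by blast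
    then show False using Pbdd[OF P(1) gc] P Lu Ru by blast
  qed
  have Bne: "B \<noteq> {}"
  proof -
    obtain l where "l \<in> L" using Lne by blast
    then have "l \<in> carrier G" using PS[of L] Sc by blast
    then show ?thesis using reach by blast
  qed
  have "\<exists>C c0. C \<subseteq> carrier G \<and> C \<in> \<B> \<and> B \<subseteq> C \<and> c0 \<in> C \<and> (\<forall>c\<in>C. (stp G K C)\<^sup>*\<^sup>* c0 c)"
  proof (cases "K_connected G K B")
    case True
    obtain c0 where "c0 \<in> B" using Bne by blast
    moreover have "\<forall>c\<in>B. (stp G K B)\<^sup>*\<^sup>* c0 c"
    proof
      fix c assume "c \<in> B"
      then have "K_joined_in G K B c0 c" using True \<open>c0 \<in> B\<close> unfolding K_connected_def by blast
      then show "(stp G K B)\<^sup>*\<^sup>* c0 c" using joined_imp by metis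
    qed
    ultimately show ?thesis using Bc BB by (intro exI[of _ B] exI[of _ c0]) simp
  next
    case False
    then have "\<exists>h\<in>carrier G. \<exists>n\<ge>1. B \<subseteq> h <# set_pow G K n" using cases by (simp only: simp_thms)
    then obtain h n where h: "h \<in> carrier G" "n \<ge> 1" "B \<subseteq> h <# set_pow G K n" by blast
    then obtain m where m: "n = Suc m" by (cases n) auto
    define C where "C = h <# set_pow G K (Suc m)"
    have spc: "set_pow G K (Suc m) \<subseteq> carrier G" using sp_car[OF Kc] by blast
    have one_in: "\<one> \<in> set_pow G K (Suc m)" using sp_one[OF Kc K1] by blast
    have Cc: "C \<subseteq> carrier G" unfolding C_def using l_coset_subset_G[OF spc h(1)] .
    have CB: "C \<in> \<B>" unfolding C_def using blc[OF h(1) sp_bdd[OF KB mulc bsing[OF one_closed]]] .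
    have hC: "h \<in> C" unfolding C_def l_coset_def using one_in h(1) by (metis UN_iff r_one singletonI)
    have "(stp G K C)\<^sup>*\<^sup>* h c" if cC: "c \<in> C" for c
    proof -
      obtain x where x: "x \<in> set_pow G K (Suc m)" "c = h \<otimes> x" using cC unfolding C_def l_coset_def by blast
      have "(stp G K (set_pow G K (Suc m)))\<^sup>*\<^sup>* \<one> x" using sp_con[OF Kc K1] x by blast
      then have "(stp G K C)\<^sup>*\<^sup>* (h \<otimes> \<one>) (h \<otimes> x)"
        using rt_map[OF h(1) spc, of C] unfolding C_def l_coset_def by blast
      then show ?thesis using x h(1) by simp
    qed
    then show ?thesis using Cc CB hC h(3) m C_def by (intro exI[of _ C] exI[of _ h]) simp
  qed
  then obtain C c0 where Cc: "C \<subseteq> carrier G" and CB: "C \<in> \<B>" and BC: "B \<subseteq> C" and c0C: "c0 \<in> C"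
    and Ccon: "\<forall>c\<in>C. (stp G K C)\<^sup>*\<^sup>* c0 c" by blast
  have c0c: "c0 \<in> carrier G" using Cc c0C by blast
  define E where "E = (B \<union> C) <#> ((\<lambda>x. inv x) ` C)"
  have EB: "E \<in> \<B>" unfolding E_def using mulc bun[OF BB CB] invc CB by blast
  have FB: "E #> c0 \<in> \<B>" using brc[OF c0c EB] .
  have "\<not> R \<subseteq> E #> c0" using FB Ru bsub by blast
  then obtain r where r: "r \<in> R" "r \<notin> E #> c0" by blast
  have rc: "r \<in> carrier G" using r PS[of R] Sc by blast
  define g where "g = r \<otimes> inv c0"
  have gc: "g \<in> carrier G" using g_def rc c0c by simp
  have gc0: "g \<otimes> c0 = r" using g_def rc c0c by (simp add: m_assoc)
  have gCn: "g \<otimes> c \<notin> B \<union> C" if cC: "c \<in> C" for c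
  proof
    assume e: "g \<otimes> c \<in> B \<union> C"
    have cc: "c \<in> carrier G" using cC Cc by blast
    have "(g \<otimes> c) \<otimes> inv c \<in> E" unfolding E_def set_mult_def using e cC by blast
    moreover have "((g \<otimes> c) \<otimes> inv c) \<otimes> c0 = r" using gc cc c0c gc0 by (simp add: m_assoc)
    ultimately have "r \<in> E #> c0" unfolding r_coset_def by force
    then show False using r by blast
  qed
  have gC_R: "g \<otimes> c \<in> R" if cC: "c \<in> C" for c
  proof -
    have "Rs (g \<otimes> c0) (g \<otimes> c)" unfolding Rs_def
      using rt_map[OF gc Cc, of S K c0 c] Ccon cC gCn Cc gc unfolding S_def by blast
    then show ?thesis using Pcl[of R "g \<otimes> c0"] gc0 r by simp
  qed
  have LCc: "L \<union> C \<subseteq> carrier G" using PS[of L] Sc Cc by blast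
  have LC_con: "(stp G K (L \<union> C))\<^sup>*\<^sup>* c0 z" if zLC: "z \<in> L \<union> C" for z
  proof (cases "z \<in> C")
    case True
    then show ?thesis using Ccon rt_mono[of C "L \<union> C" K c0 z] LCc by blast
  next
    case False
    then have zL: "z \<in> L" using zLC by blast
    then have "z \<in> carrier G" using PS[of L] Sc by blast
    then obtain b where b: "b \<in> B" "Rg b z" using reach by blast
    have "z \<in> L \<union> B \<longrightarrow> (stp G K (L \<union> C))\<^sup>*\<^sup>* c0 z"
      using b(2) unfolding Rg_def
    proof (induction rule: rtranclp_induct)
      case base
      then show ?case using Ccon rt_mono[of C "L \<union> C" K c0 b] LCc BC b(1) by blast
    next
      case (step y w)
      show ?case
      proof
        assume w: "w \<in> L \<union> B"
        show "(stp G K (L \<union> C))\<^sup>*\<^sup>* c0 w"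
        proof (cases "w \<in> B")
          case True
          then show ?thesis using Ccon rt_mono[of C "L \<union> C" K c0 w] LCc BC by blast
        next
          case False
          then have wL: "w \<in> L" using w by blast
          have yc: "y \<in> carrier G" using step(2) by (simp add: stp_def)
          have "y \<notin> R"
          proof
            assume "y \<in> R"
            then have "w \<in> R \<union> B" using Pstep[of R y w] step(2) by blast
            then show False using wL False LRd by blast
          qed
          then have yLB: "y \<in> L \<union> B" using yc LRS S_def by blast
          then have "(stp G K (L \<union> C))\<^sup>*\<^sup>* c0 y" using step(3) by blast
          moreover have "stp G K (L \<union> C) y w" using step(2) yLB BC wL by (auto simp: stp_def)
          ultimately show ?thesis by (meson rtranclp.rtrancl_into_rtrancl)
        qed
      qed
    qed
    then show ?thesis using zL by blast
  qed
  define a where "a = inv g"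
  have ac: "a \<in> carrier G" using a_def gc by simp
  have ag: "a \<otimes> (g \<otimes> u) = u" if "u \<in> carrier G" for u using a_def gc that by (simp add: m_assoc[symmetric])
  have ga: "g \<otimes> (a \<otimes> u) = u" if "u \<in> carrier G" for u using a_def gc that by (simp add: m_assoc[symmetric])
  have aS: "a \<otimes> u \<in> S" if uLC: "u \<in> L \<union> C" for u
  proof -
    have uc: "u \<in> carrier G" using uLC LCc by blast
    have "a \<otimes> u \<notin> B"
    proof
      assume "a \<otimes> u \<in> B"
      then have "a \<otimes> u \<in> C" using BC by blast
      then have "u \<in> R" "u \<notin> B \<union> C" using gC_R gCn ga[OF uc] by metis+
      then show False using uLC LRd by blast
    qed
    then show ?thesis using ac uc S_def by simp
  qed
  have aRs: "Rs (a \<otimes> c0) (a \<otimes> z)" if "z \<in> L \<union> C" for z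
    unfolding Rs_def using rt_map[OF ac LCc, of S K c0 z] LC_con[OF that] aS by blast
  have ac0L: "a \<otimes> c0 \<in> L"
  proof (rule ccontr)
    assume nL: "a \<otimes> c0 \<notin> L"
    have "a \<otimes> c0 \<in> S" using aS c0C by blast
    then have "a \<otimes> c0 \<in> R" using nL LRS by blast
    then have aLR: "a \<otimes> l \<in> R" if "l \<in> L" for l using Pcl[of R "a \<otimes> c0"] aRs that by blast
    have "L \<subseteq> L - (g <# L)"
    proof
      fix l assume lL: "l \<in> L"
      have "l \<notin> g <# L"
      proof
        assume "l \<in> g <# L"
        then obtain l' where l': "l' \<in> L" "l = g \<otimes> l'" unfolding l_coset_def by blast
        have "l' \<in> carrier G" using l' PS[of L] Sc by blast
        then have "a \<otimes> l = l'" using ag l' by simp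
        then show False using aLR[OF lL] l' LRd by blast
      qed
      then show "l \<in> L - (g <# L)" using lL by blast
    qed
    then show False using Pbdd[of L g] gc Lu by blast
  qed
  have ginvL: "a \<otimes> z \<in> L" if "z \<in> L \<union> B" for z
    using Pcl[of L "a \<otimes> c0"] ac0L aRs that BC by blast
  have gR: "g \<otimes> z \<in> R" if zRB: "z \<in> R \<union> B" for z
  proof (cases "z \<in> B")
    case True then show ?thesis using gC_R BC by blast
  next
    case False
    then have zR: "z \<in> R" using zRB by blast
    have zc: "z \<in> carrier G" using zR PS[of R] Sc by blast
    have "g \<otimes> z \<notin> L \<union> B"
    proof
      assume "g \<otimes> z \<in> L \<union> B"
      then have "a \<otimes> (g \<otimes> z) \<in> L" using ginvL by blast
      then show False using ag[OF zc] zR LRd by auto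
    qed
    then show ?thesis using gc zc LRS S_def by auto
  qed
  have powR: "g [^] n \<otimes> b \<in> R" if n1: "(n::nat) \<ge> 1" and bB: "b \<in> B" for n b
  proof -
    have "g [^] Suc k \<otimes> b \<in> R" for k :: nat
    proof (induction k)
      case 0 then show ?case using gR bB gc by simp
    next
      case (Suc k)
      have "g [^] Suc (Suc k) \<otimes> b = g \<otimes> (g [^] Suc k \<otimes> b)"
        using gc bB Bc nat_pow_Suc2[of g "Suc k"] by (auto simp: m_assoc)
      then show ?case using gR Suc by simp
    qed
    moreover obtain k where "n = Suc k" using n1 by (cases n) auto
    ultimately show ?thesis by (simp del: nat_pow_Suc)
  qed
  have powL: "a [^] n \<otimes> b \<in> L" if n1: "(n::nat) \<ge> 1" and bB: "b \<in> B" for n b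
  proof -
    have "a [^] Suc k \<otimes> b \<in> L" for k :: nat
    proof (induction k)
      case 0 then show ?case using ginvL bB ac by simp
    next
      case (Suc k)
      have "a [^] Suc (Suc k) \<otimes> b = a \<otimes> (a [^] Suc k \<otimes> b)"
        using ac bB Bc nat_pow_Suc2[of a "Suc k"] by (auto simp: m_assoc)
      then show ?case using ginvL Suc by simp
    qed
    moreover obtain k where "n = Suc k" using n1 by (cases n) auto
    ultimately show ?thesis by (simp del: nat_pow_Suc)
  qed
  have Rc: "R \<subseteq> carrier G" and Lc: "L \<subseteq> carrier G" using PS Sc by blast+
  have evR: "\<exists>N. \<forall>n\<ge>N. g [^] (n::nat) \<otimes> x \<in> R" if xc: "x \<in> carrier G" for x
  proof -
    obtain b0 where "b0 \<in> B" "Rg b0 x" using reach[OF xc] by blast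
    then show ?thesis using eventually_in[OF gc Rc _ powR _ _ Bc, of K b0 x] Pstep[of R] unfolding Rg_def by blast
  qed
  have evL: "\<exists>N. \<forall>n\<ge>N. a [^] (n::nat) \<otimes> x \<in> L" if xc: "x \<in> carrier G" for x
  proof -
    obtain b0 where "b0 \<in> B" "Rg b0 x" using reach[OF xc] by blast
    then show ?thesis using eventually_in[OF ac Lc _ powL _ _ Bc, of K b0 x] Pstep[of L] unfolding Rg_def by blast
  qed
  define H where "H = {g [^] (k::int) | k. True}"
  have Hr: "H = range (\<lambda>k::int. g [^] k)" unfolding H_def by blast
  have subH: "subgroup H G" unfolding Hr using subgroup_of_powers[OF gc] .
  define D where "D = R - (g <# R)"
  have DB: "D \<in> \<B>"
  proof -
    have "(R - (g <# R)) \<union> ((g <# R) - R) \<in> \<B>" using Rt gc unfolding acts_trivially_def by blast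
    then show ?thesis unfolding D_def using bsub by blast
  qed
  have Dc: "D \<subseteq> carrier G" using D_def Rc by blast
  define B' where "B' = (\<lambda>x. inv x) ` D"
  have B'B: "B' \<in> \<B>" unfolding B'_def using invc DB by blast
  have B'c: "B' \<subseteq> carrier G" using B'_def Dc by auto
  have Hc: "H \<subseteq> carrier G" using subH subgroup.subset by blast
  have "B' <#> H = carrier G"
  proof
    show "B' <#> H \<subseteq> carrier G" using set_mult_closed[OF B'c Hc] .
    show "carrier G \<subseteq> B' <#> H"
    proof
      fix y assume yc: "y \<in> carrier G"
      define x where "x = inv y"
      have xc: "x \<in> carrier G" using x_def yc by simp
      define \<phi> where "\<phi> = (\<lambda>m::int. g [^] m \<otimes> x \<in> R)"
      obtain N1 where N1: "\<forall>n\<ge>N1. g [^] (n::nat) \<otimes> x \<in> R" using evR[OF xc] by blast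
      obtain N2 where N2: "\<forall>n\<ge>N2. a [^] (n::nat) \<otimes> x \<in> L" using evL[OF xc] by blast
      have p1: "\<phi> (int N1)" using N1 unfolding \<phi>_def by (simp add: int_pow_int)
      have "g [^] (- int N2) = a [^] N2" using gc a_def by (simp add: int_pow_neg_int nat_pow_inv)
      then have p2: "\<not> \<phi> (- int N2)" using N2 LRd unfolding \<phi>_def by auto
      have "- int N2 + int (N1 + N2) = int N1" by simp
      then obtain m where m: "\<not> \<phi> (-1 + m)" "\<phi> m" using int_crossing[of \<phi> "- int N2" "N1 + N2"] p1 p2 by auto
      define z where "z = g [^] m \<otimes> x"
      have zc: "z \<in> carrier G" using z_def gc xc by simp
      have zR: "z \<in> R" using m(2) z_def \<phi>_def by simp
      have e1: "g [^] ((-1) + m) = g [^] (-1::int) \<otimes> g [^] m" by (rule int_pow_mult[OF gc])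
      have e2: "g [^] (-1::int) = a" using gc a_def int_pow_neg[OF gc, of 1] by simp
      have "g [^] (-1 + m) = a \<otimes> g [^] m" using e1 e2 by simp
      then have "g [^] (-1 + m) \<otimes> x = a \<otimes> z" using z_def gc xc ac by (simp add: m_assoc)
      then have azR: "a \<otimes> z \<notin> R" using m(1) \<phi>_def by simp
      have "z \<notin> g <# R"
      proof
        assume "z \<in> g <# R"
        then obtain r' where r': "r' \<in> R" "z = g \<otimes> r'" unfolding l_coset_def by blast
        then have "a \<otimes> z = r'" using ag Rc by blast
        then show False using azR r' by simp
      qed
      then have zD: "z \<in> D" using zR D_def by blast
      have "y = inv z \<otimes> g [^] m"
      proof -
        have "inv z = inv x \<otimes> inv (g [^] m)" using z_def gc xc by (simp add: inv_mult_group)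
        then have "inv z \<otimes> g [^] m = inv x" using gc xc by (simp add: m_assoc)
        then show ?thesis using x_def yc by simp
      qed
      moreover have "inv z \<in> B'" using zD B'_def by blast
      moreover have "g [^] m \<in> H" using H_def by blast
      ultimately show "y \<in> B' <#> H" unfolding set_mult_def by blast
    qed
  qed
  then have "bounded_index G \<B> H" unfolding bounded_index_def using B'B by blast
  then show ?thesis using subH gc H_def by blast
qed

end

theorem proposition5p6:
  fixes G :: "('a, 'b) monoid_scheme" and \<B> :: "'a set set"
    and K B L R :: "'a set"
  assumes "large_scale_group G \<B>"
    and "K \<subseteq> carrier G" and "(\<lambda>x. inv\<^bsub>G\<^esub> x) ` K = K" and "K \<in> \<B>" and "\<one>\<^bsub>G\<^esub> \<in> K"
    and "B \<in> \<B>"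
    and "K_components G K (carrier G - B) = {L, R}" and "L \<noteq> R"
    and "L \<notin> \<B>" and "R \<notin> \<B>"
    and "acts_trivially G \<B> L" and "acts_trivially G \<B> R"
    and "K_connected G K B \<or>
         (\<exists>h\<in>carrier G. \<exists>n\<ge>1. B \<subseteq> h <#\<^bsub>G\<^esub> set_pow G K n)"
  shows "\<exists>g\<in>carrier G. subgroup {g [^]\<^bsub>G\<^esub> (k::int) | k. True} G \<and>
           bounded_index G \<B> {g [^]\<^bsub>G\<^esub> (k::int) | k. True}"
proof -
  have grp: "group G" and bor: "bornology (carrier G) \<B>"
    and invc: "\<forall>B\<in>\<B>. (\<lambda>x. inv\<^bsub>G\<^esub> x) ` B \<in> \<B>"
    and mulc: "\<forall>B\<in>\<B>. \<forall>C\<in>\<B>. B <#>\<^bsub>G\<^esub> C \<in> \<B>"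
    using assms(1) unfolding large_scale_group_def by blast+
  show ?thesis using group.main[OF grp bor invc mulc assms(2-13)] .
qed

end
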